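(* Let $X$ be a finite set, $f:X\to X$ a function, and consider the iterative generator $\mathcal G$ with state sequences $\mathcal G(s)=(x_0=s,x_1,x_2,\dots)$, $x_i=f(x_{i-1})$ for $i\ge 1$, $s\in X$. (1) For every seed $s\in X$, the state sequence $\vec x=\mathcal G(s)$ satisfies $\mathcal D_{\vec x}(k)=\min\{k,p\}$ for all $k\ge 1$, where $p$ is the length of the cycle that $\vec x$ eventually enters. (2) $\mathcal D_{\mathcal G}(k)=\min\{k,p\}$ for all $k\ge1$, where $p$ is the length of the shortest cycle of $f$ (i.e. the least $p\ge1$ such that $f^p(x)=x$ for some $x\in X$).
   Context: The diversity of a sequence $\vec x=(x_0,x_1,\dots)$ is the function $\mathcal D_{\vec x}(k)$, $k=1,2,\dots$, defined as the minimum, over all $i\ge 0$, of the number of distinct values among $x_i,x_{i+1},\dots,x_{i+k-1}$. The diversity of the generator is $\mathcal D_{\mathcal G}(k)=\min\{\mathcal D_{\mathcal G(s)}(k): s\in X\}$. Since $X$ is finite, every state sequence is eventually periodic, i.e. it eventually enters a cycle of $f$. *)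

theory Defs
  imports Main
begin

definition window_card :: "(nat \<Rightarrow> 'a) \<Rightarrow> nat \<Rightarrow> nat \<Rightarrow> nat" where
  "window_card x k i = card {x (i + j) | j. j < k}"

definition seq_diversity :: "(nat \<Rightarrow> 'a) \<Rightarrow> nat \<Rightarrow> nat" where
  "seq_diversity x k = Min (range (window_card x k))"

definition state_seq :: "('a \<Rightarrow> 'a) \<Rightarrow> 'a \<Rightarrow> nat \<Rightarrow> 'a" where
  "state_seq f s i = (f ^^ i) s"

definition gen_diversity :: "('a::finite \<Rightarrow> 'a) \<Rightarrow> nat \<Rightarrow> nat" where
  "gen_diversity f k = Min ((\<lambda>s. seq_diversity (state_seq f s) k) ` UNIV)"

definition eventual_cycle_length :: "('a \<Rightarrow> 'a) \<Rightarrow> 'a \<Rightarrow> nat" where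
  "eventual_cycle_length f s = (LEAST p. 1 \<le> p \<and> (\<exists>i. (f ^^ p) (state_seq f s i) = state_seq f s i))"

definition shortest_cycle_length :: "('a \<Rightarrow> 'a) \<Rightarrow> nat" where
  "shortest_cycle_length f = (LEAST p. 1 \<le> p \<and> (\<exists>x. (f ^^ p) x = x))"

end

theory Submission
  imports Defs
begin

lemma ss_add: "state_seq f s (i + j) = (f ^^ j) (state_seq f s i)"
proof -
  have "(f ^^ (j + i)) s = (f ^^ j) ((f ^^ i) s)" by (simp add: funpow_add)
  then show ?thesis by (simp add: state_seq_def add.commute)
qed

lemma ecl_exists: "\<exists>p. 1 \<le> p \<and> (\<exists>i. (f ^^ p) (state_seq f s i) = state_seq f s i)"
  for f :: "'a::finite \<Rightarrow> 'a"
proof -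
  have "\<not> inj (state_seq f s)"
    using finite_UNIV infinite_iff_countable_subset[of "UNIV::'a set"]
    by (metis UNIV_I finite_imageD finite_subset infinite_UNIV_nat subsetI)
  then obtain a b where ab: "state_seq f s a = state_seq f s b" "a < b"
    by (metis inj_on_def linorder_neqE_nat)
  then have "(f ^^ (b - a)) (state_seq f s a) = state_seq f s a"
    using ss_add[of f s a "b-a"] by simp
  then show ?thesis using ab by (intro exI[of _ "b-a"]) auto
qed

lemma ecl_props:
  fixes f :: "'a::finite \<Rightarrow> 'a"
  shows "1 \<le> eventual_cycle_length f s \<and>
     (\<exists>i. (f ^^ eventual_cycle_length f s) (state_seq f s i) = state_seq f s i)"
  unfolding eventual_cycle_length_def using LeastI_ex[OF ecl_exists] .

lemma ecl_le:
  "1 \<le> q \<Longrightarrow> (f ^^ q) (state_seq f s i) = state_seq f s i \<Longrightarrow> eventual_cycle_length f s \<le> q"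
  unfolding eventual_cycle_length_def by (rule Least_le) auto

lemma funpow_mult_fix: "(f ^^ p) y = y \<Longrightarrow> (f ^^ (p * n)) y = y"
  by (induction n) (auto simp: funpow_add)

lemma part1:
  fixes f :: "'a::finite \<Rightarrow> 'a"
  assumes k: "1 \<le> k"
  shows "seq_diversity (state_seq f s) k = min k (eventual_cycle_length f s)"
proof -
  define p where "p = eventual_cycle_length f s"
  define x where "x = state_seq f s"
  have p1: "1 \<le> p" using ecl_props[of f s] p_def by simp
  obtain i0 where i0: "(f ^^ p) (x i0) = x i0" using ecl_props[of f s] p_def x_def by blast
  have per: "x (i0 + j) = x (i0 + j mod p)" for j
  proof -
    have "x (i0 + j) = (f ^^ (j mod p + p * (j div p))) (x i0)"
      using ss_add[of f s i0 j] x_def by simp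
    also have "\<dots> = (f ^^ (j mod p)) (x i0)"
      using funpow_mult_fix[OF i0, of "j div p"] by (simp only: funpow_add comp_apply)
    also have "\<dots> = x (i0 + j mod p)" using ss_add[of f s i0] x_def by simp
    finally show ?thesis .
  qed
  have sep: "b - a \<ge> p" if "x a = x b" "a < b" for a b
  proof -
    have "(f ^^ (b - a)) (x a) = x a" using ss_add[of f s a "b-a"] that x_def by simp
    then show ?thesis using ecl_le[of "b-a" f s a] that p_def x_def by simp
  qed
  have setimg: "{x (i + j) | j. j < k} = (\<lambda>j. x (i + j)) ` {..<k}" for i by auto
  have lower: "min k p \<le> window_card x k i" for i
  proof -
    have "inj_on (\<lambda>j. x (i + j)) {..<min k p}"
    proof (rule inj_onI)
      fix a b assume a: "a \<in> {..<min k p}" and b: "b \<in> {..<min k p}" and e: "x (i + a) = x (i + b)"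
      show "a = b"
      proof (rule ccontr)
        assume "a \<noteq> b"
        then consider "a < b" | "b < a" by linarith
        then show False
        proof cases
          case 1 then show False using sep[of "i+a" "i+b"] e a b by auto
        next
          case 2 then show False using sep[of "i+b" "i+a"] e a b by auto
        qed
      qed
    qed
    then have "card ((\<lambda>j. x (i + j)) ` {..<min k p}) = min k p" by (simp add: card_image)
    moreover have "card ((\<lambda>j. x (i + j)) ` {..<min k p}) \<le> card ((\<lambda>j. x (i + j)) ` {..<k})"
      by (rule card_mono) auto
    ultimately show ?thesis unfolding window_card_def setimg by simp
  qed
  have upper: "window_card x k i0 \<le> min k p"
  proof -
    have "card ((\<lambda>j. x (i0 + j)) ` {..<k}) \<le> k"
      using card_image_le[of "{..<k}" "\<lambda>j. x (i0 + j)"] by simp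
    moreover have "(\<lambda>j. x (i0 + j)) ` {..<k} \<subseteq> (\<lambda>j. x (i0 + j)) ` {..<p}"
    proof
      fix z assume "z \<in> (\<lambda>j. x (i0 + j)) ` {..<k}"
      then obtain j where "z = x (i0 + j)" by blast
      then have "z = x (i0 + j mod p)" using per by simp
      moreover have "j mod p < p" using p1 by simp
      ultimately show "z \<in> (\<lambda>j. x (i0 + j)) ` {..<p}" by blast
    qed
    then have "card ((\<lambda>j. x (i0 + j)) ` {..<k}) \<le> card ((\<lambda>j. x (i0 + j)) ` {..<p})"
      by (intro card_mono) auto
    moreover have "card ((\<lambda>j. x (i0 + j)) ` {..<p}) \<le> p"
      using card_image_le[of "{..<p}" "\<lambda>j. x (i0 + j)"] by simp
    ultimately show ?thesis unfolding window_card_def setimg by simp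
  qed
  have fin: "finite (range (window_card x k))"
  proof -
    have "window_card x k i \<le> k" for i
      unfolding window_card_def setimg using card_image_le[of "{..<k}" "\<lambda>j. x (i + j)"] by simp
    then have "range (window_card x k) \<subseteq> {..k}" by auto
    then show ?thesis using finite_subset by blast
  qed
  have "Min (range (window_card x k)) = min k p"
  proof (rule Min_eqI[OF fin])
    show "min k p \<in> range (window_card x k)"
      using lower[of i0] upper by (intro image_eqI[of _ _ i0]) auto
  qed (use lower in auto)
  then show ?thesis unfolding seq_diversity_def x_def p_def .
qed

lemma scl_exists: "\<exists>p. 1 \<le> p \<and> (\<exists>x. (f ^^ p) x = x)" for f :: "'a::finite \<Rightarrow> 'a"
  using ecl_props[of f undefined] by blast

lemma part2:
  fixes f :: "'a::finite \<Rightarrow> 'a"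
  assumes k: "1 \<le> k"
  shows "gen_diversity f k = min k (shortest_cycle_length f)"
proof -
  define q where "q = shortest_cycle_length f"
  obtain y where q1: "1 \<le> q" and y: "(f ^^ q) y = y"
    using LeastI_ex[OF scl_exists[of f]] unfolding q_def shortest_cycle_length_def by blast
  have ge: "q \<le> eventual_cycle_length f s" for s
    using ecl_props[of f s] unfolding q_def shortest_cycle_length_def
    by (intro Least_le) blast
  have ey: "eventual_cycle_length f y \<le> q"
    using ecl_le[of q f y 0] q1 y by (simp add: state_seq_def)
  have "Min ((\<lambda>s. seq_diversity (state_seq f s) k) ` UNIV) = min k q"
  proof (rule Min_eqI)
    show "finite ((\<lambda>s. seq_diversity (state_seq f s) k) ` UNIV)" by simp
  next
    fix z assume "z \<in> (\<lambda>s. seq_diversity (state_seq f s) k) ` UNIV"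
    then obtain s where "z = seq_diversity (state_seq f s) k" by blast
    then show "min k q \<le> z" using part1[OF k, of f s] ge[of s] by simp
  next
    show "min k q \<in> (\<lambda>s. seq_diversity (state_seq f s) k) ` UNIV"
      using part1[OF k, of f y] ey ge[of y] by (intro image_eqI[of _ _ y]) auto
  qed
  then show ?thesis unfolding gen_diversity_def q_def .
qed

theorem mainTheorem1:
  fixes f :: "'a::finite \<Rightarrow> 'a"
  shows "(\<forall>s k. 1 \<le> k \<longrightarrow>
            seq_diversity (state_seq f s) k = min k (eventual_cycle_length f s))
       \<and> (\<forall>k. 1 \<le> k \<longrightarrow> gen_diversity f k = min k (shortest_cycle_length f))"
  using part1 part2 by blast

end
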